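(* Let $(X,\Gamma)$ be a $(\mu,\nu)$-path system space. For every $\delta\ge0$ and $\eta\ge0$ there exist $\theta\ge0$ and a function $\zeta\colon\mathbb R_{\ge0}\times\mathbb R_{\ge0}\to\mathbb R_{\ge0}$ with the following property. Let $\pi_A\colon X\to A$ be a $\delta$-constricting map and let $Y\subseteq X$ be $\eta$-quasi-convex. Then for all $\varepsilon_1,\varepsilon_2\ge0$, $$\operatorname{diam}_A(Y)\le \operatorname{diam}(A^{+\theta+\varepsilon_1}\cap Y^{+\varepsilon_2})+\zeta(\varepsilon_1,\varepsilon_2)\quad\text{and}\quad \operatorname{diam}(A^{+\theta+\varepsilon_1}\cap Y^{+\varepsilon_2})\le\operatorname{diam}_A(Y)+\zeta(\varepsilon_1,\varepsilon_2).$$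
   Context: A path is a rectifiable continuous map $\alpha\colon[a,b]\to X$ parametrised by arc length; it is a $(\kappa,\lambda)$-quasi-geodesic if $d(\alpha(t),\alpha(t'))\le|t-t'|\le\kappa d(\alpha(t),\alpha(t'))+\lambda$. A $(\mu,\nu)$-path system space $(X,\Gamma)$ is a geodesic metric space $X$ with a collection $\Gamma$ of paths closed under subpaths, such that any two points are joined by an element of $\Gamma$ and every element is a $(\mu,\nu)$-quasi-geodesic. $Y^{+\eta}=\{x\in X: d(x,Y)\le\eta\}$. A subset $Y$ is $\eta$-quasi-convex if every $\gamma\in\Gamma$ with endpoints in $Y$ lies in $Y^{+\eta}$. A map $\pi_A\colon X\to A$ onto a subset $A$ is $\delta$-constricting if (CS1) $d(x,\pi_A(x))\le\delta$ for $x\in A$, and (CS2) for all $x,y\in X$ and $\gamma\in\Gamma$ joining $x$ to $y$, if $d(\pi_A(x),\pi_A(y))>\delta$ then $\gamma$ meets $B_X(\pi_A(x),\delta)$ and $B_X(\pi_A(y),\delta)$. $\operatorname{diam}_A(Y)=\operatorname{diam}(\pi_A(Y))$; the diameter of the empty set is $0$. *)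

theory Defs
  imports "HOL-Analysis.Analysis"
begin

text \<open>A path is represented as a triple (a, b, alpha) with a \<le> b; only the values of
  alpha on [a,b] matter. The metric space is an abstract one, (M, d) with Metric_space M d.\<close>

type_synonym 'a rpath = "real \<times> real \<times> (real \<Rightarrow> 'a)"

definition plen :: "('a \<Rightarrow> 'a \<Rightarrow> real) \<Rightarrow> (real \<Rightarrow> 'a) \<Rightarrow> real \<Rightarrow> real \<Rightarrow> ereal" where
  "plen d \<alpha> s t = Sup {ereal (\<Sum>i<n. d (\<alpha> (p i)) (\<alpha> (p (Suc i)))) | n p.
      p 0 = s \<and> p n = t \<and> (\<forall>i<n. p i \<le> p (Suc i))}"

definition is_path :: "'a set \<Rightarrow> ('a \<Rightarrow> 'a \<Rightarrow> real) \<Rightarrow> 'a rpath \<Rightarrow> bool" where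
  "is_path M d \<gamma> = (case \<gamma> of (a, b, \<alpha>) \<Rightarrow>
      a \<le> b \<and> \<alpha> ` {a..b} \<subseteq> M
      \<and> (\<forall>t\<in>{a..b}. \<forall>e>0. \<exists>r>0. \<forall>s\<in>{a..b}. \<bar>s - t\<bar> < r \<longrightarrow> d (\<alpha> s) (\<alpha> t) < e)
      \<and> plen d \<alpha> a b < \<infinity>
      \<and> (\<forall>s t. a \<le> s \<and> s \<le> t \<and> t \<le> b \<longrightarrow> plen d \<alpha> s t = ereal (t - s)))"

definition quasi_geodesic :: "('a \<Rightarrow> 'a \<Rightarrow> real) \<Rightarrow> real \<Rightarrow> real \<Rightarrow> 'a rpath \<Rightarrow> bool" where
  "quasi_geodesic d \<kappa> lam \<gamma> = (case \<gamma> of (a, b, \<alpha>) \<Rightarrow>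
      (\<forall>t\<in>{a..b}. \<forall>t'\<in>{a..b}. d (\<alpha> t) (\<alpha> t') \<le> \<bar>t - t'\<bar>
         \<and> \<bar>t - t'\<bar> \<le> \<kappa> * d (\<alpha> t) (\<alpha> t') + lam))"

definition joins :: "'a rpath \<Rightarrow> 'a \<Rightarrow> 'a \<Rightarrow> bool" where
  "joins \<gamma> x y = (case \<gamma> of (a, b, \<alpha>) \<Rightarrow> \<alpha> a = x \<and> \<alpha> b = y)"

definition geodesic_space :: "'a set \<Rightarrow> ('a \<Rightarrow> 'a \<Rightarrow> real) \<Rightarrow> bool" where
  "geodesic_space M d = (Metric_space M d \<and> (\<forall>x\<in>M. \<forall>y\<in>M. \<exists>g.
      g 0 = x \<and> g (d x y) = y \<and> g ` {0..d x y} \<subseteq> M \<and>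
      (\<forall>s\<in>{0..d x y}. \<forall>t\<in>{0..d x y}. d (g s) (g t) = \<bar>s - t\<bar>)))"

definition path_system_space ::
  "'a set \<Rightarrow> ('a \<Rightarrow> 'a \<Rightarrow> real) \<Rightarrow> 'a rpath set \<Rightarrow> real \<Rightarrow> real \<Rightarrow> bool" where
  "path_system_space M d \<Gamma> \<mu> \<nu> = (geodesic_space M d
     \<and> (\<forall>\<gamma>\<in>\<Gamma>. is_path M d \<gamma> \<and> quasi_geodesic d \<mu> \<nu> \<gamma>)
     \<and> (\<forall>a b \<alpha> s t. (a, b, \<alpha>) \<in> \<Gamma> \<and> a \<le> s \<and> s \<le> t \<and> t \<le> b \<longrightarrow>
          (\<exists>\<beta>. (s, t, \<beta>) \<in> \<Gamma> \<and> (\<forall>r\<in>{s..t}. \<beta> r = \<alpha> r)))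
     \<and> (\<forall>x\<in>M. \<forall>y\<in>M. \<exists>\<gamma>\<in>\<Gamma>. joins \<gamma> x y))"

text \<open>Closed neighbourhood Y^{+eta} = {x \<in> X. d(x,Y) \<le> eta}; empty if Y is empty.\<close>
definition nbhd :: "'a set \<Rightarrow> ('a \<Rightarrow> 'a \<Rightarrow> real) \<Rightarrow> 'a set \<Rightarrow> real \<Rightarrow> 'a set" where
  "nbhd M d Y \<eta> = {x \<in> M. Y \<noteq> {} \<and> Inf (d x ` Y) \<le> \<eta>}"

definition quasi_convex :: "'a set \<Rightarrow> ('a \<Rightarrow> 'a \<Rightarrow> real) \<Rightarrow> 'a rpath set \<Rightarrow> real \<Rightarrow> 'a set \<Rightarrow> bool" where
  "quasi_convex M d \<Gamma> \<eta> Y = (Y \<subseteq> M \<and> (\<forall>\<gamma>\<in>\<Gamma>. \<forall>x\<in>Y. \<forall>y\<in>Y. joins \<gamma> x y \<longrightarrow>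
       (case \<gamma> of (a, b, \<alpha>) \<Rightarrow> \<alpha> ` {a..b} \<subseteq> nbhd M d Y \<eta>)))"

definition meets_ball :: "('a \<Rightarrow> 'a \<Rightarrow> real) \<Rightarrow> 'a rpath \<Rightarrow> 'a \<Rightarrow> real \<Rightarrow> bool" where
  "meets_ball d \<gamma> p r = (case \<gamma> of (a, b, \<alpha>) \<Rightarrow> (\<exists>t\<in>{a..b}. d (\<alpha> t) p \<le> r))"

definition constricting ::
  "'a set \<Rightarrow> ('a \<Rightarrow> 'a \<Rightarrow> real) \<Rightarrow> 'a rpath set \<Rightarrow> real \<Rightarrow> 'a set \<Rightarrow> ('a \<Rightarrow> 'a) \<Rightarrow> bool" where
  "constricting M d \<Gamma> \<delta> A \<pi> = (A \<subseteq> M \<and> \<pi> ` M = A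
     \<and> (\<forall>x\<in>A. d x (\<pi> x) \<le> \<delta>)
     \<and> (\<forall>x\<in>M. \<forall>y\<in>M. \<forall>\<gamma>\<in>\<Gamma>. joins \<gamma> x y \<and> d (\<pi> x) (\<pi> y) > \<delta> \<longrightarrow>
          meets_ball d \<gamma> (\<pi> x) \<delta> \<and> meets_ball d \<gamma> (\<pi> y) \<delta>))"

text \<open>Diameter, valued in extended reals (infinite for unbounded sets); diam {} = 0.\<close>
definition mdiam :: "('a \<Rightarrow> 'a \<Rightarrow> real) \<Rightarrow> 'a set \<Rightarrow> ereal" where
  "mdiam d S = (if S = {} then 0 else (SUP p\<in>S \<times> S. ereal (d (fst p) (snd p))))"

end

theory Submission
  imports Defs
begin

lemma mdiam_nonneg: "Metric_space M d \<Longrightarrow> 0 \<le> mdiam d S"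
proof (cases "S = {}")
  case False
  then obtain x where x: "x \<in> S" by auto
  assume m: "Metric_space M d"
  have "ereal 0 \<le> ereal (d (fst (x,x)) (snd (x,x)))" using Metric_space.nonneg[OF m] by simp
  also have "\<dots> \<le> (SUP p\<in>S \<times> S. ereal (d (fst p) (snd p)))"
    by (rule SUP_upper) (use x in auto)
  finally show ?thesis using False by (simp add: mdiam_def zero_ereal_def)
qed (simp add: mdiam_def)

lemma mdiam_ge: "x \<in> S \<Longrightarrow> y \<in> S \<Longrightarrow> ereal (d x y) \<le> mdiam d S"
proof -
  assume xy: "x \<in> S" "y \<in> S"
  have "ereal (d (fst (x,y)) (snd (x,y))) \<le> (SUP p\<in>S \<times> S. ereal (d (fst p) (snd p)))"
    by (rule SUP_upper) (use xy in auto)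
  thus ?thesis using xy by (auto simp add: mdiam_def)
qed

lemma mdiam_le: "(\<And>x y. x \<in> S \<Longrightarrow> y \<in> S \<Longrightarrow> ereal (d x y) \<le> B) \<Longrightarrow> 0 \<le> B \<Longrightarrow> mdiam d S \<le> B"
  unfolding mdiam_def by (auto intro!: SUP_least)

lemma nbhd_mem:
  assumes m: "Metric_space M d" and "x \<in> M" "z \<in> Y" "d x z \<le> e"
  shows "x \<in> nbhd M d Y e"
proof -
  have "Inf (d x ` Y) \<le> d x z"
    by (rule cInf_lower) (use assms Metric_space.nonneg[OF m] in \<open>auto intro: bdd_belowI[where m=0]\<close>)
  thus ?thesis using assms unfolding nbhd_def by auto
qed

lemma nbhd_near:
  assumes m: "Metric_space M d" and "x \<in> nbhd M d Y e"
  obtains z where "z \<in> Y" "d x z < e + 1"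
proof -
  have ne: "Y \<noteq> {}" and i: "Inf (d x ` Y) < e + 1" using assms unfolding nbhd_def by auto
  have "bdd_below (d x ` Y)" using Metric_space.nonneg[OF m] by (auto intro: bdd_belowI[where m=0])
  then obtain w where "w \<in> d x ` Y" "w < e + 1" using cInf_less_iff[of "d x ` Y" "e+1"] ne i by auto
  thus ?thesis using that by auto
qed

lemma proj_close:
  assumes P: "path_system_space M d \<Gamma> \<mu> \<nu>" and C: "constricting M d \<Gamma> \<delta> A \<pi>"
    and y: "y \<in> M" and a: "a \<in> A"
  shows "d y (\<pi> y) \<le> \<bar>\<mu>\<bar> * d y a + \<bar>\<nu>\<bar> + 3 * \<delta> + d y a"
proof -
  have m: "Metric_space M d" using P unfolding path_system_space_def geodesic_space_def by auto
  have AM: "A \<subseteq> M" and piM: "\<pi> ` M = A" and cs1: "\<forall>x\<in>A. d x (\<pi> x) \<le> \<delta>"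
    and cs2: "\<forall>x\<in>M. \<forall>y\<in>M. \<forall>\<gamma>\<in>\<Gamma>. joins \<gamma> x y \<and> d (\<pi> x) (\<pi> y) > \<delta> \<longrightarrow>
          meets_ball d \<gamma> (\<pi> x) \<delta> \<and> meets_ball d \<gamma> (\<pi> y) \<delta>"
    using C unfolding constricting_def by auto
  have aM: "a \<in> M" using a AM by auto
  have pyM: "\<pi> y \<in> M" "\<pi> a \<in> M" using y aM piM AM by auto
  have dnn: "0 \<le> d y a" "\<delta> \<ge> 0" using Metric_space.nonneg[OF m] cs1 a
    by (auto intro: order_trans[OF Metric_space.nonneg[OF m]])
  show ?thesis
  proof (cases "d (\<pi> y) (\<pi> a) > \<delta>")
    case True
    obtain \<gamma> where g: "\<gamma> \<in> \<Gamma>" "joins \<gamma> y a" using P y aM unfolding path_system_space_def by blast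
    obtain s t \<alpha> where ge: "\<gamma> = (s, t, \<alpha>)" by (cases \<gamma>) auto
    have ip: "is_path M d \<gamma>" and qg: "quasi_geodesic d \<mu> \<nu> \<gamma>" using P g unfolding path_system_space_def by auto
    have st: "s \<le> t" and aim: "\<alpha> ` {s..t} \<subseteq> M" using ip ge unfolding is_path_def by auto
    have ends: "\<alpha> s = y" "\<alpha> t = a" using g ge unfolding joins_def by auto
    have "meets_ball d \<gamma> (\<pi> y) \<delta>" using cs2 y aM g True by blast
    then obtain r where r: "r \<in> {s..t}" "d (\<alpha> r) (\<pi> y) \<le> \<delta>" using ge unfolding meets_ball_def by auto
    have qq: "\<forall>t1\<in>{s..t}. \<forall>t2\<in>{s..t}. d (\<alpha> t1) (\<alpha> t2) \<le> \<bar>t1 - t2\<bar>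
         \<and> \<bar>t1 - t2\<bar> \<le> \<mu> * d (\<alpha> t1) (\<alpha> t2) + \<nu>"
      using qg ge unfolding quasi_geodesic_def by auto
    have sI: "s \<in> {s..t}" and tI: "t \<in> {s..t}" using st by auto
    have q1: "d (\<alpha> s) (\<alpha> r) \<le> \<bar>s - r\<bar>" using qq sI r(1) by blast
    have q2: "\<bar>s - t\<bar> \<le> \<mu> * d (\<alpha> s) (\<alpha> t) + \<nu>" using qq sI tI by blast
    have "\<bar>s - r\<bar> \<le> \<bar>s - t\<bar>" using r by auto
    have "\<mu> * d y a \<le> \<bar>\<mu>\<bar> * d y a" using dnn by (simp add: mult_right_mono)
    moreover have "d y (\<alpha> r) \<le> \<bar>s - r\<bar>" using q1 ends by simp
    moreover have "\<bar>s - t\<bar> \<le> \<mu> * d y a + \<nu>" using q2 ends by simp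
    moreover have "\<nu> \<le> \<bar>\<nu>\<bar>" by simp
    ultimately have dyr: "d y (\<alpha> r) \<le> \<bar>\<mu>\<bar> * d y a + \<bar>\<nu>\<bar>" using \<open>\<bar>s - r\<bar> \<le> \<bar>s - t\<bar>\<close> by linarith
    have arM: "\<alpha> r \<in> M" using aim r by auto
    have "d y (\<pi> y) \<le> d y (\<alpha> r) + d (\<alpha> r) (\<pi> y)" using Metric_space.triangle[OF m y arM pyM(1)] .
    thus ?thesis using dyr r dnn by linarith
  next
    case False
    have "d y (\<pi> y) \<le> d y a + d a (\<pi> y)" using Metric_space.triangle[OF m y aM pyM(1)] .
    moreover have "d a (\<pi> y) \<le> d a (\<pi> a) + d (\<pi> a) (\<pi> y)" using Metric_space.triangle[OF m aM pyM(2) pyM(1)] .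
    moreover have "d a (\<pi> a) \<le> \<delta>" using cs1 a by auto
    moreover have "d (\<pi> a) (\<pi> y) = d (\<pi> y) (\<pi> a)" using Metric_space.commute[OF m] by auto
    moreover have "0 \<le> \<bar>\<mu>\<bar> * d y a" using dnn by simp
    ultimately show ?thesis using False dnn by linarith
  qed
qed

lemma near_point:
  assumes P: "path_system_space M d \<Gamma> \<mu> \<nu>" and C: "constricting M d \<Gamma> \<delta> A \<pi>"
    and Q: "quasi_convex M d \<Gamma> \<eta> Y" and x: "x \<in> Y" and y: "y \<in> Y"
    and gt: "d (\<pi> x) (\<pi> y) > \<delta>"
  shows "\<exists>y1\<in>Y. d y1 (\<pi> x) \<le> \<delta> + \<eta> + 1"
proof -
  have m: "Metric_space M d" using P unfolding path_system_space_def geodesic_space_def by auto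
  have YM: "Y \<subseteq> M" and qc: "\<forall>\<gamma>\<in>\<Gamma>. \<forall>x\<in>Y. \<forall>y\<in>Y. joins \<gamma> x y \<longrightarrow>
       (case \<gamma> of (a, b, \<alpha>) \<Rightarrow> \<alpha> ` {a..b} \<subseteq> nbhd M d Y \<eta>)" using Q unfolding quasi_convex_def by auto
  have AM: "A \<subseteq> M" and piM: "\<pi> ` M = A"
    and cs2: "\<forall>x\<in>M. \<forall>y\<in>M. \<forall>\<gamma>\<in>\<Gamma>. joins \<gamma> x y \<and> d (\<pi> x) (\<pi> y) > \<delta> \<longrightarrow>
          meets_ball d \<gamma> (\<pi> x) \<delta> \<and> meets_ball d \<gamma> (\<pi> y) \<delta>"
    using C unfolding constricting_def by auto
  have xM: "x \<in> M" and yM: "y \<in> M" using x y YM by auto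
  obtain \<gamma> where g: "\<gamma> \<in> \<Gamma>" "joins \<gamma> x y" using P xM yM unfolding path_system_space_def by blast
  obtain s t \<alpha> where ge: "\<gamma> = (s, t, \<alpha>)" by (cases \<gamma>) auto
  have "meets_ball d \<gamma> (\<pi> x) \<delta>" using cs2 xM yM g gt by blast
  then obtain r where r: "r \<in> {s..t}" "d (\<alpha> r) (\<pi> x) \<le> \<delta>" using ge unfolding meets_ball_def by auto
  have "\<alpha> ` {s..t} \<subseteq> nbhd M d Y \<eta>" using qc g x y ge by fastforce
  hence pn: "\<alpha> r \<in> nbhd M d Y \<eta>" using r by auto
  then obtain y1 where y1: "y1 \<in> Y" "d (\<alpha> r) y1 < \<eta> + 1" using nbhd_near[OF m] by blast
  have prM: "\<alpha> r \<in> M" using pn unfolding nbhd_def by auto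
  have y1M: "y1 \<in> M" using y1 YM by auto
  have pxM: "\<pi> x \<in> M" using xM piM AM by auto
  have "d y1 (\<pi> x) \<le> d y1 (\<alpha> r) + d (\<alpha> r) (\<pi> x)" using Metric_space.triangle[OF m y1M prM pxM] .
  moreover have "d y1 (\<alpha> r) = d (\<alpha> r) y1" using Metric_space.commute[OF m] by auto
  ultimately show ?thesis using y1 r by force
qed

theorem mainTheorem10:
  fixes M :: "'a set" and d :: "'a \<Rightarrow> 'a \<Rightarrow> real" and \<Gamma> :: "'a rpath set"
    and \<mu> \<nu> :: real
  assumes "path_system_space M d \<Gamma> \<mu> \<nu>"
  shows "\<forall>\<delta>\<ge>0. \<forall>\<eta>\<ge>0. \<exists>\<theta>\<ge>0. \<exists>\<zeta> :: real \<Rightarrow> real \<Rightarrow> real.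
           (\<forall>e1\<ge>0. \<forall>e2\<ge>0. \<zeta> e1 e2 \<ge> 0) \<and>
           (\<forall>A \<pi> Y. constricting M d \<Gamma> \<delta> A \<pi> \<longrightarrow> quasi_convex M d \<Gamma> \<eta> Y \<longrightarrow>
              (\<forall>e1\<ge>0. \<forall>e2\<ge>0.
                 mdiam d (\<pi> ` Y) \<le> mdiam d (nbhd M d A (\<theta> + e1) \<inter> nbhd M d Y e2) + ereal (\<zeta> e1 e2)
               \<and> mdiam d (nbhd M d A (\<theta> + e1) \<inter> nbhd M d Y e2) \<le> mdiam d (\<pi> ` Y) + ereal (\<zeta> e1 e2)))"
proof (intro allI impI)
  fix \<delta> \<eta> :: real
  assume d0: "\<delta> \<ge> 0" and e0: "\<eta> \<ge> 0"
  note P = assms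
  have m: "Metric_space M d" using P unfolding path_system_space_def geodesic_space_def by auto
  define \<theta> where "\<theta> = \<delta> + \<eta> + 1"
  define K where "K = (\<lambda>r::real. \<bar>\<mu>\<bar> * r + \<bar>\<nu>\<bar> + 3 * \<delta> + r)"
  define C2 where "C2 = (\<lambda>e1 e2. 2 * (e2 + 1 + K (e2 + 1 + \<theta> + e1 + 1)))"
  define \<zeta> where "\<zeta> = (\<lambda>e1 e2. 2 * \<theta> + \<delta> + C2 e1 e2)"
  have th0: "\<theta> \<ge> 0" using d0 e0 by (simp add: \<theta>_def)
  have K0: "\<And>r. r \<ge> 0 \<Longrightarrow> K r \<ge> 0" using d0 by (simp add: K_def)
  have Kmono: "\<And>r r'. r \<le> r' \<Longrightarrow> K r \<le> K r'"
    unfolding K_def by (simp add: mult_left_mono add_mono)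
  have C20: "\<And>e1 e2. e1 \<ge> 0 \<Longrightarrow> e2 \<ge> 0 \<Longrightarrow> C2 e1 e2 \<ge> 0"
    unfolding C2_def using K0 th0 by simp
  have z0: "\<And>e1 e2. e1 \<ge> 0 \<Longrightarrow> e2 \<ge> 0 \<Longrightarrow> \<zeta> e1 e2 \<ge> 0"
    unfolding \<zeta>_def using C20 th0 d0 by (simp add: add_nonneg_nonneg)
  show "\<exists>\<theta>\<ge>0. \<exists>\<zeta> :: real \<Rightarrow> real \<Rightarrow> real.
           (\<forall>e1\<ge>0. \<forall>e2\<ge>0. \<zeta> e1 e2 \<ge> 0) \<and>
           (\<forall>A \<pi> Y. constricting M d \<Gamma> \<delta> A \<pi> \<longrightarrow> quasi_convex M d \<Gamma> \<eta> Y \<longrightarrow>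
              (\<forall>e1\<ge>0. \<forall>e2\<ge>0.
                 mdiam d (\<pi> ` Y) \<le> mdiam d (nbhd M d A (\<theta> + e1) \<inter> nbhd M d Y e2) + ereal (\<zeta> e1 e2)
               \<and> mdiam d (nbhd M d A (\<theta> + e1) \<inter> nbhd M d Y e2) \<le> mdiam d (\<pi> ` Y) + ereal (\<zeta> e1 e2)))"
  proof (intro exI[of _ \<theta>] conjI th0 exI[of _ \<zeta>] allI impI)
    show "\<And>e1 e2. 0 \<le> e1 \<Longrightarrow> 0 \<le> e2 \<Longrightarrow> 0 \<le> \<zeta> e1 e2" using z0 by blast
  next
    fix A \<pi> Y and e1 e2 :: real
    assume C: "constricting M d \<Gamma> \<delta> A \<pi>" and Q: "quasi_convex M d \<Gamma> \<eta> Y"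
      and e10: "0 \<le> e1" and e20: "0 \<le> e2"
    define I where "I = nbhd M d A (\<theta> + e1) \<inter> nbhd M d Y e2"
    have YM: "Y \<subseteq> M" using Q unfolding quasi_convex_def by auto
    have AM: "A \<subseteq> M" and piM: "\<pi> ` M = A" using C unfolding constricting_def by auto
    have piY: "\<And>y. y \<in> Y \<Longrightarrow> \<pi> y \<in> A" "\<And>y. y \<in> Y \<Longrightarrow> \<pi> y \<in> M" using YM piM AM by auto
    have mI: "0 \<le> mdiam d I" and mP: "0 \<le> mdiam d (\<pi> ` Y)" using mdiam_nonneg[OF m] by auto
    have zz: "0 \<le> \<zeta> e1 e2" using z0 e10 e20 .
    have inI: "y1 \<in> I" if "y1 \<in> Y" "d y1 (\<pi> x) \<le> \<theta>" "x \<in> Y" for y1 x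
    proof -
      have y1M: "y1 \<in> M" using that YM by auto
      have "d y1 y1 = 0" using Metric_space.zero[OF m y1M y1M] by simp
      hence a: "y1 \<in> nbhd M d Y e2" using nbhd_mem[OF m y1M that(1)] e20 by simp
      have "d y1 (\<pi> x) \<le> \<theta> + e1" using that e10 by simp
      hence "y1 \<in> nbhd M d A (\<theta> + e1)" using nbhd_mem[OF m y1M piY(1)[OF that(3)]] by simp
      thus ?thesis using a unfolding I_def by simp
    qed
    have part1: "mdiam d (\<pi> ` Y) \<le> mdiam d I + ereal (\<zeta> e1 e2)"
    proof (rule mdiam_le)
      show "0 \<le> mdiam d I + ereal (\<zeta> e1 e2)" using mI zz by simp
    next
      fix p q assume "p \<in> \<pi> ` Y" "q \<in> \<pi> ` Y"
      then obtain x y where x: "x \<in> Y" "p = \<pi> x" and y: "y \<in> Y" "q = \<pi> y" by auto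
      have "ereal (d p q) \<le> mdiam d I + ereal (2 * \<theta> + \<delta>)"
      proof (cases "d (\<pi> x) (\<pi> y) > \<delta>")
        case True
        have True': "d (\<pi> y) (\<pi> x) > \<delta>" using True Metric_space.commute[OF m] by metis
        obtain y1 where y1: "y1 \<in> Y" "d y1 (\<pi> x) \<le> \<theta>"
          using near_point[OF P C Q x(1) y(1) True] \<theta>_def by auto
        obtain y2 where y2: "y2 \<in> Y" "d y2 (\<pi> y) \<le> \<theta>"
          using near_point[OF P C Q y(1) x(1) True'] \<theta>_def by auto
        have I12: "y1 \<in> I" "y2 \<in> I" using inI y1 y2 x y by auto
        have M12: "y1 \<in> M" "y2 \<in> M" using y1 y2 YM by auto
        have "d (\<pi> x) (\<pi> y) \<le> d (\<pi> x) y1 + d y1 (\<pi> y)"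
          using Metric_space.triangle[OF m piY(2)[OF x(1)] M12(1) piY(2)[OF y(1)]] .
        moreover have "d y1 (\<pi> y) \<le> d y1 y2 + d y2 (\<pi> y)"
          using Metric_space.triangle[OF m M12 piY(2)[OF y(1)]] .
        moreover have "d (\<pi> x) y1 = d y1 (\<pi> x)" using Metric_space.commute[OF m] by auto
        ultimately have "d (\<pi> x) (\<pi> y) \<le> d y1 y2 + (2 * \<theta> + \<delta>)" using y1 y2 d0 by linarith
        hence "d p q \<le> d y1 y2 + (2 * \<theta> + \<delta>)" using x y by simp
        hence "ereal (d p q) \<le> ereal (d y1 y2) + ereal (2 * \<theta> + \<delta>)" by simp
        also have "\<dots> \<le> mdiam d I + ereal (2 * \<theta> + \<delta>)"
          by (rule add_right_mono) (rule mdiam_ge[OF I12])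
        finally show ?thesis .
      next
        case False
        have "ereal (d p q) \<le> 0 + ereal (2 * \<theta> + \<delta>)" using False x y th0 by simp
        also have "\<dots> \<le> mdiam d I + ereal (2 * \<theta> + \<delta>)" by (rule add_right_mono) (rule mI)
        finally show ?thesis .
      qed
      also have "\<dots> \<le> mdiam d I + ereal (\<zeta> e1 e2)"
        by (rule add_left_mono) (simp add: \<zeta>_def C20 e10 e20)
      finally show "ereal (d p q) \<le> mdiam d I + ereal (\<zeta> e1 e2)" .
    qed
    have close: "\<exists>w\<in>Y. d u w \<le> e2 + 1 \<and> d w (\<pi> w) \<le> K (e2 + 1 + \<theta> + e1 + 1)" if u: "u \<in> I" for u
    proof -
      have uA: "u \<in> nbhd M d A (\<theta> + e1)" and uY: "u \<in> nbhd M d Y e2" and uM: "u \<in> M"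
        using u unfolding I_def nbhd_def by auto
      obtain w where w: "w \<in> Y" "d u w < e2 + 1" using nbhd_near[OF m uY] by blast
      obtain a where a: "a \<in> A" "d u a < \<theta> + e1 + 1" using nbhd_near[OF m uA] by blast
      have wM: "w \<in> M" and aM: "a \<in> M" using w a YM AM by auto
      have "d w a \<le> d w u + d u a" using Metric_space.triangle[OF m wM uM aM] .
      moreover have "d w u = d u w" using Metric_space.commute[OF m] by auto
      ultimately have "d w a \<le> e2 + 1 + \<theta> + e1 + 1" using w a by linarith
      hence "K (d w a) \<le> K (e2 + 1 + \<theta> + e1 + 1)" by (rule Kmono)
      moreover have "d w (\<pi> w) \<le> K (d w a)" using proj_close[OF P C wM a(1)] by (simp add: K_def)
      ultimately show ?thesis using w by force
    qed
    have part2: "mdiam d I \<le> mdiam d (\<pi> ` Y) + ereal (\<zeta> e1 e2)"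
    proof (rule mdiam_le)
      show "0 \<le> mdiam d (\<pi> ` Y) + ereal (\<zeta> e1 e2)" using mP zz by simp
    next
      fix u v assume u: "u \<in> I" and v: "v \<in> I"
      obtain wu where wu: "wu \<in> Y" "d u wu \<le> e2 + 1" "d wu (\<pi> wu) \<le> K (e2 + 1 + \<theta> + e1 + 1)"
        using close[OF u] by blast
      obtain wv where wv: "wv \<in> Y" "d v wv \<le> e2 + 1" "d wv (\<pi> wv) \<le> K (e2 + 1 + \<theta> + e1 + 1)"
        using close[OF v] by blast
      have uM: "u \<in> M" and vM: "v \<in> M" using u v unfolding I_def nbhd_def by auto
      have wM: "wu \<in> M" "wv \<in> M" using wu wv YM by auto
      have pM: "\<pi> wu \<in> M" "\<pi> wv \<in> M" using piY wu wv by auto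
      have t1: "d u v \<le> d u wu + d wu v" using Metric_space.triangle[OF m uM wM(1) vM] .
      have t2: "d wu v \<le> d wu (\<pi> wu) + d (\<pi> wu) v" using Metric_space.triangle[OF m wM(1) pM(1) vM] .
      have t3: "d (\<pi> wu) v \<le> d (\<pi> wu) (\<pi> wv) + d (\<pi> wv) v" using Metric_space.triangle[OF m pM vM] .
      have t4: "d (\<pi> wv) v \<le> d (\<pi> wv) wv + d wv v" using Metric_space.triangle[OF m pM(2) wM(2) vM] .
      have c1: "d (\<pi> wv) wv = d wv (\<pi> wv)" "d wv v = d v wv" using Metric_space.commute[OF m] by auto
      have "d u v \<le> d (\<pi> wu) (\<pi> wv) + C2 e1 e2"
      proof -
        define k where "k = K (e2 + 1 + \<theta> + e1 + 1)"
        have "d u v \<le> d (\<pi> wu) (\<pi> wv) + 2 * (e2 + 1 + k)"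
        proof -
          have t4': "d (\<pi> wv) v \<le> d wv (\<pi> wv) + d v wv" using t4 c1 by simp
          have a1: "d u wu \<le> e2 + 1" "d wu (\<pi> wu) \<le> k" "d v wv \<le> e2 + 1" "d wv (\<pi> wv) \<le> k"
            using wu wv unfolding k_def by auto
          show ?thesis using t1 t2 t3 t4' a1 by (smt (verit))
        qed
        thus ?thesis unfolding C2_def k_def .
      qed
      hence "ereal (d u v) \<le> ereal (d (\<pi> wu) (\<pi> wv)) + ereal (C2 e1 e2)" by simp
      also have "\<dots> \<le> mdiam d (\<pi> ` Y) + ereal (C2 e1 e2)"
        by (rule add_right_mono) (rule mdiam_ge; use wu wv in auto)
      also have "\<dots> \<le> mdiam d (\<pi> ` Y) + ereal (\<zeta> e1 e2)"
        by (rule add_left_mono) (simp add: \<zeta>_def th0 d0)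
      finally show "ereal (d u v) \<le> mdiam d (\<pi> ` Y) + ereal (\<zeta> e1 e2)" .
    qed
    show "mdiam d (\<pi> ` Y) \<le> mdiam d (nbhd M d A (\<theta> + e1) \<inter> nbhd M d Y e2) + ereal (\<zeta> e1 e2)"
      using part1 by (simp add: I_def)
    show "mdiam d (nbhd M d A (\<theta> + e1) \<inter> nbhd M d Y e2) \<le> mdiam d (\<pi> ` Y) + ereal (\<zeta> e1 e2)"
      using part2 by (simp add: I_def)
  qed
qed

end
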